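(* Let $s>0$, $\gamma\ge0$, $u>0$, and $\nu_0,\nu_1\ge0$ with $\nu_0+\nu_1=1$. Let $(a_t)_{t\ge0}$ be the embedded ASG process, and let $y(\cdot;y_0)$ solve $$\dot y=-y(1-y)[s+\gamma(1-y)]+u\nu_1(1-y)-u\nu_0y,\qquad y(0)=y_0\in[0,1].$$ Then for all $\alpha\in\Xi^\star$, $t\ge0$ and $y_0\in[0,1]$, $$H\big(\alpha,y(t;y_0)\big)=\mathbb E_\alpha\big[H(a_t,y_0)\big].$$ In particular, if the process starts from the tree consisting only of an unmarked root, then $y(t;y_0)=\mathbb E\big[H(a_t,y_0)\big]$.
   Context: $\Xi^\star$ is the set of finite rooted trees with the following properties: every vertex has outdegree at most 3; the children of a vertex of outdegree 2 are labelled left and right, and those of a vertex of outdegree 3 are labelled left, middle and right; every vertex of outdegree 1 carries a mark, either $\times$ or $\circ$; no other vertex carries a mark. The embedded ASG process $(a_t)_{t\ge0}$ is the continuous-time Markov chain on $\Xi^\star$ in which, independently for each leaf $\ell$ of the current tree: - at rate $s$, two children (left, right) are attached to $\ell$; - at rate $\gamma$, three children (left, middle, right) are attached to $\ell$; - at rate $u\nu_1$, one child is attached to $\ell$ and $\ell$ is marked $\times$; - at rate $u\nu_0$, one child is attached to $\ell$ and $\ell$ is marked $\circ$. $\mathbb E_\alpha$ denotes expectation when $a_0=\alpha$. For $\alpha\in\Xi^\star$ and $z\in[0,1]$, $H(\alpha,z)$ is the probability that the root of $\alpha$ gets type 1 ("unfit"). Types are obtained as follows. Each leaf independently gets type 1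 with probability $z$ and type 0 otherwise. Types then propagate to the root: a vertex marked $\times$ (resp. $\circ$) has type 1 (resp. 0); a vertex of outdegree 2 has type 1 iff both children have type 1; a vertex of outdegree 3 has type 0 iff its left child has type 0 or both its middle and right children have type 0. *)

theory Defs
  imports "HOL-Analysis.Analysis"
begin

datatype mark = Cross | Circ

text \<open>Finite rooted trees in Xi-star: a leaf; a vertex of outdegree 1 carrying a mark
  and its child; a vertex of outdegree 2 with left/right child; a vertex of
  outdegree 3 with left/middle/right child.\<close>
datatype xi = Leaf | Unary mark xi | Binary xi xi | Ternary xi xi xi

text \<open>H alpha z: probability that the root gets type 1 (unfit), leaves i.i.d.
  type 1 with probability z; subtrees are disjoint hence independent.\<close>
fun H :: "xi \<Rightarrow> real \<Rightarrow> real" where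
  "H Leaf z = z"
| "H (Unary Cross t) z = 1"
| "H (Unary Circ t) z = 0"
| "H (Binary l r) z = H l z * H r z"
| "H (Ternary l m r) z = H l z * (1 - (1 - H m z) * (1 - H r z))"

fun asg_trans :: "real \<Rightarrow> real \<Rightarrow> real \<Rightarrow> real \<Rightarrow> real \<Rightarrow> xi \<Rightarrow> (real \<times> xi) list" where
  "asg_trans s g u nu0 nu1 Leaf =
     [(s, Binary Leaf Leaf), (g, Ternary Leaf Leaf Leaf),
      (u * nu1, Unary Cross Leaf), (u * nu0, Unary Circ Leaf)]"
| "asg_trans s g u nu0 nu1 (Unary m t) =
     map (\<lambda>(c, t'). (c, Unary m t')) (asg_trans s g u nu0 nu1 t)"
| "asg_trans s g u nu0 nu1 (Binary l r) =
     map (\<lambda>(c, l'). (c, Binary l' r)) (asg_trans s g u nu0 nu1 l) @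
     map (\<lambda>(c, r'). (c, Binary l r')) (asg_trans s g u nu0 nu1 r)"
| "asg_trans s g u nu0 nu1 (Ternary l m r) =
     map (\<lambda>(c, l'). (c, Ternary l' m r)) (asg_trans s g u nu0 nu1 l) @
     map (\<lambda>(c, m'). (c, Ternary l m' r)) (asg_trans s g u nu0 nu1 m) @
     map (\<lambda>(c, r'). (c, Ternary l m r')) (asg_trans s g u nu0 nu1 r)"

definition asg_rate :: "real \<Rightarrow> real \<Rightarrow> real \<Rightarrow> real \<Rightarrow> real \<Rightarrow> xi \<Rightarrow> real" where
  "asg_rate s g u nu0 nu1 a = (\<Sum>(c, b)\<leftarrow>asg_trans s g u nu0 nu1 a. c)"

text \<open>asg_part n f a t = E_a[ f(a_t) ; exactly n jumps in [0,t] ],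
  via the first-jump decomposition (minimal chain construction).\<close>
fun asg_part :: "real \<Rightarrow> real \<Rightarrow> real \<Rightarrow> real \<Rightarrow> real \<Rightarrow> nat \<Rightarrow> (xi \<Rightarrow> real) \<Rightarrow> xi \<Rightarrow> real \<Rightarrow> real" where
  "asg_part s g u nu0 nu1 0 f a t = exp (- asg_rate s g u nu0 nu1 a * t) * f a"
| "asg_part s g u nu0 nu1 (Suc n) f a t =
     integral {0..t} (\<lambda>r. exp (- asg_rate s g u nu0 nu1 a * r) *
        (\<Sum>(c, b)\<leftarrow>asg_trans s g u nu0 nu1 a. c * asg_part s g u nu0 nu1 n f b (t - r)))"

definition asg_expect :: "real \<Rightarrow> real \<Rightarrow> real \<Rightarrow> real \<Rightarrow> real \<Rightarrow> (xi \<Rightarrow> real) \<Rightarrow> xi \<Rightarrow> real \<Rightarrow> real" where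
  "asg_expect s g u nu0 nu1 f a t = (\<Sum>n. asg_part s g u nu0 nu1 n f a t)"

end

theory Submission
  imports Defs
begin


lemma stay_nonpos:
  fixes z z' :: "real \<Rightarrow> real" and M T :: real
  assumes zc: "continuous_on {0..T} z" and z0: "z 0 \<le> 0" and T: "0 \<le> T"
    and zd: "\<And>x. 0 < x \<Longrightarrow> x < T \<Longrightarrow> (z has_real_derivative z' x) (at x)"
    and zb: "\<And>x. 0 < x \<Longrightarrow> x < T \<Longrightarrow> 0 < z x \<Longrightarrow> z' x \<le> M * z x"
  shows "z T \<le> 0"
proof (rule ccontr)
  assume "\<not> z T \<le> 0" then have zT: "0 < z T" by simp
  define S where "S = {0..T} \<inter> z -` {..0}"
  have "closed S" unfolding S_def by (rule continuous_closed_preimage[OF zc]) auto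
  have "bounded S" unfolding S_def by (rule bounded_subset[of "{0..T}"]) auto
  have "compact S" using \<open>closed S\<close> \<open>bounded S\<close> by (simp add: compact_eq_bounded_closed)
  have "0 \<in> S" using z0 T by (auto simp: S_def)
  obtain t0 where t0: "t0 \<in> S" "\<And>x. x \<in> S \<Longrightarrow> x \<le> t0"
    using compact_attains_sup[OF \<open>compact S\<close>] \<open>0 \<in> S\<close> by blast
  have zt0: "z t0 \<le> 0" "0 \<le> t0" "t0 \<le> T" using t0(1) by (auto simp: S_def)
  have t0T: "t0 < T" using zt0 zT by (metis order.not_eq_order_implies_strict not_le)
  have pos: "0 < z x" if "t0 < x" "x \<le> T" for x
  proof (rule ccontr)
    assume "\<not> 0 < z x"
    then have "x \<in> S" using that zt0 by (auto simp: S_def)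
    then show False using t0(2) that by force
  qed
  define \<phi> where "\<phi> x = exp (- M * x) * z x" for x
  have cont: "continuous_on {t0..T} \<phi>" unfolding \<phi>_def
    by (intro continuous_intros continuous_on_subset[OF zc]) (use zt0 in auto)
  have d\<phi>: "(\<phi> has_real_derivative (exp (- M * x) * (- M)) * z x + z' x * exp (- M * x)) (at x)"
    if "t0 < x" "x < T" for x
  proof -
    have "((\<lambda>x. exp (- M * x)) has_real_derivative (exp (- M * x) * (- M))) (at x)"
      by (auto intro!: derivative_eq_intros)
    then show ?thesis unfolding \<phi>_def by (rule DERIV_mult) (rule zd, use that zt0 in auto)
  qed
  obtain l \<xi> where \<xi>: "t0 < \<xi>" "\<xi> < T" "DERIV \<phi> \<xi> :> l" "\<phi> T - \<phi> t0 = (T - t0) * l"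
    using MVT[OF t0T cont] d\<phi> by (meson real_differentiable_def)
  have l: "l = (exp (- M * \<xi>) * (- M)) * z \<xi> + z' \<xi> * exp (- M * \<xi>)"
    using DERIV_unique[OF \<xi>(3) d\<phi>[OF \<xi>(1,2)]] .
  have "z' \<xi> \<le> M * z \<xi>" using zb[of \<xi>] pos[of \<xi>] \<xi> zt0 by auto
  then have "l \<le> 0" unfolding l
    by (simp add: algebra_simps mult_left_mono[of "z' \<xi>" "M * z \<xi>" "exp (- (M * \<xi>))", simplified])
  then have "\<phi> T \<le> \<phi> t0" using \<xi>(4) t0T by (smt (verit) mult_nonneg_nonpos)
  moreover have "\<phi> t0 \<le> 0" unfolding \<phi>_def using zt0 by (simp add: mult_nonneg_nonpos)
  moreover have "\<phi> T > 0" unfolding \<phi>_def using zT by simp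
  ultimately show False by simp
qed



lemma sl_map_pair: "sum_list (map ((\<lambda>(c, b). f c b) \<circ> (\<lambda>(c, x). (c, G x))) xs) = (\<Sum>(c, x)\<leftarrow>xs. f c (G x))"
  by (induction xs) auto

lemma sl_affine: "(\<Sum>(c, x)\<leftarrow>xs. c * h x :: real) = p * (\<Sum>(c, x)\<leftarrow>xs. c) + q * (\<Sum>(c, x)\<leftarrow>xs. c * f x)"
  if "\<And>x. h x = p + q * f x"
  using that by (induction xs) (auto simp: algebra_simps)

fun dH :: "xi \<Rightarrow> real \<Rightarrow> real" where
  "dH Leaf z = 1"
| "dH (Unary m t) z = 0"
| "dH (Binary l r) z = dH l z * H r z + H l z * dH r z"
| "dH (Ternary l m r) z = dH l z * (1 - (1 - H m z) * (1 - H r z))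
     + H l z * (dH m z * (1 - H r z) + (1 - H m z) * dH r z)"

lemma H_deriv: "((\<lambda>z. H a z) has_real_derivative dH a z) (at z)"
proof (induction a)
  case Leaf then show ?case by (auto intro!: derivative_eq_intros)
next
  case (Unary m a) then show ?case by (cases m) auto
next
  case (Binary l r) then show ?case
    by (auto intro!: derivative_eq_intros)
next
  case (Ternary l m r) then show ?case
    by (auto intro!: derivative_eq_intros simp: algebra_simps)
qed

lemma H_cont: "continuous_on S (H a)"
  using H_deriv by (meson DERIV_isCont continuous_at_imp_continuous_on)

lemma H_range: "0 \<le> z \<Longrightarrow> z \<le> 1 \<Longrightarrow> 0 \<le> H a z \<and> H a z \<le> 1"
proof (induction a)
  case (Unary m a) then show ?case by (cases m) auto
next
  case (Binary l r) then show ?case by (simp add: mult_le_one)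
next
  case (Ternary l m r)
  then show ?case by (simp add: mult_le_one)
qed auto

fun nl :: "xi \<Rightarrow> real" where
  "nl Leaf = 1"
| "nl (Unary m t) = nl t"
| "nl (Binary l r) = nl l + nl r"
| "nl (Ternary l m r) = nl l + nl m + nl r"

lemma nl_pos: "nl a \<ge> 1"
  by (induction a) auto

lemma sl_lin: "(\<And>x. k (G x) = p + q * f x) \<Longrightarrow>
  (\<Sum>(c, b)\<leftarrow>map (\<lambda>(c, x). (c, G x)) xs. c * k b) = p * (\<Sum>(c, x)\<leftarrow>xs. c) + q * (\<Sum>(c, x)\<leftarrow>xs. c * f x :: real)"
  by (induction xs) (auto simp: algebra_simps)

context
  fixes s gm u nu0 nu1 :: real
begin

abbreviation "TR \<equiv> asg_trans s gm u nu0 nu1"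
abbreviation "RR \<equiv> asg_rate s gm u nu0 nu1"
definition "SS a z = (\<Sum>(c, b)\<leftarrow>TR a. c * H b z)"
definition "FF z = - z * (1 - z) * (s + gm * (1 - z)) + u * nu1 * (1 - z) - u * nu0 * z"

lemma RR_simps:
  "RR Leaf = s + gm + u * nu1 + u * nu0"
  "RR (Unary m t) = RR t"
  "RR (Binary l r) = RR l + RR r"
  "RR (Ternary l m' r) = RR l + RR m' + RR r"
  by (simp_all add: asg_rate_def sl_map_pair)

lemma SS_Unary: "SS (Unary m t) z = RR t * H (Unary m t) z"
proof -
  have "SS (Unary m t) z = H (Unary m t) z * RR t + 0 * SS t z"
    unfolding SS_def asg_rate_def asg_trans.simps
    by (rule sl_lin) (cases m, auto)
  then show ?thesis by simp
qed

lemma SS_Binary: "SS (Binary l r) z = SS l z * H r z + H l z * SS r z"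
proof -
  have "SS (Binary l r) z = (0 * RR l + H r z * SS l z) + (0 * RR r + H l z * SS r z)"
    unfolding SS_def asg_rate_def asg_trans.simps sum_list_append map_append
    by (intro arg_cong2[where f="(+)"] sl_lin) auto
  then show ?thesis by simp
qed

lemma SS_Ternary: "SS (Ternary l m r) z = SS l z * (1 - (1 - H m z) * (1 - H r z))
   + (H l z * H r z * RR m + H l z * (1 - H r z) * SS m z)
   + (H l z * H m z * RR r + H l z * (1 - H m z) * SS r z)"
proof -
  have "SS (Ternary l m r) z = (0 * RR l + (1 - (1 - H m z) * (1 - H r z)) * SS l z)
   + ((H l z * H r z * RR m + H l z * (1 - H r z) * SS m z)
   + (H l z * H m z * RR r + H l z * (1 - H m z) * SS r z))"
    unfolding SS_def asg_rate_def asg_trans.simps sum_list_append map_append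
    by (intro arg_cong2[where f="(+)"] sl_lin) (auto simp: algebra_simps)
  then show ?thesis by (simp add: algebra_simps)
qed

lemma generator: "dH a z * FF z = SS a z - RR a * H a z"
proof (induction a)
  case Leaf
  show ?case by (simp add: SS_def FF_def asg_rate_def algebra_simps power2_eq_square)
next
  case (Unary m a) then show ?case by (simp add: SS_Unary RR_simps)
next
  case (Binary l r)
  have "dH (Binary l r) z * FF z = (dH l z * FF z) * H r z + H l z * (dH r z * FF z)"
    by (simp add: algebra_simps)
  also have "\<dots> = SS (Binary l r) z - RR (Binary l r) * H (Binary l r) z"
    unfolding Binary.IH SS_Binary RR_simps by (simp add: algebra_simps)
  finally show ?case .
next
  case (Ternary l m r)
  have "dH (Ternary l m r) z * FF z = (dH l z * FF z) * (1 - (1 - H m z) * (1 - H r z))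
     + H l z * ((dH m z * FF z) * (1 - H r z) + (1 - H m z) * (dH r z * FF z))"
    by (simp add: algebra_simps)
  also have "\<dots> = SS (Ternary l m r) z - RR (Ternary l m r) * H (Ternary l m r) z"
    unfolding Ternary.IH SS_Ternary RR_simps by (simp add: algebra_simps)
  finally show ?case .
qed


lemma RR_nl: "RR a = (s + gm + u * nu1 + u * nu0) * nl a"
  by (induction a) (simp_all add: RR_simps algebra_simps)

lemma SS_nl: "(\<Sum>(c, b)\<leftarrow>TR a. c * nl b) = nl a * ((s + gm + u * nu1 + u * nu0) * nl a + (s + 2 * gm))"
proof (induction a)
  case Leaf then show ?case by (simp add: algebra_simps)
next
  case (Unary m a)
  have "(\<Sum>(c, b)\<leftarrow>TR (Unary m a). c * nl b) = 0 * RR a + 1 * (\<Sum>(c, b)\<leftarrow>TR a. c * nl b)"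
    unfolding asg_rate_def asg_trans.simps by (rule sl_lin) auto
  then show ?case using Unary by simp
next
  case (Binary l r)
  have "(\<Sum>(c, b)\<leftarrow>TR (Binary l r). c * nl b) = (nl r * RR l + 1 * (\<Sum>(c, b)\<leftarrow>TR l. c * nl b))
     + (nl l * RR r + 1 * (\<Sum>(c, b)\<leftarrow>TR r. c * nl b))"
    unfolding asg_rate_def asg_trans.simps sum_list_append map_append
    by (intro arg_cong2[where f="(+)"] sl_lin) auto
  then show ?case using Binary by (simp add: RR_nl algebra_simps)
next
  case (Ternary l m r)
  have "(\<Sum>(c, b)\<leftarrow>TR (Ternary l m r). c * nl b) = ((nl m + nl r) * RR l + 1 * (\<Sum>(c, b)\<leftarrow>TR l. c * nl b))
     + (((nl l + nl r) * RR m + 1 * (\<Sum>(c, b)\<leftarrow>TR m. c * nl b))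
     + ((nl l + nl m) * RR r + 1 * (\<Sum>(c, b)\<leftarrow>TR r. c * nl b)))"
    unfolding asg_rate_def asg_trans.simps sum_list_append map_append
    by (intro arg_cong2[where f="(+)"] sl_lin) auto
  then show ?case using Ternary by (simp add: RR_nl algebra_simps)
qed

lemma trans_nonneg:
  assumes "s \<ge> 0" "gm \<ge> 0" "u \<ge> 0" "nu0 \<ge> 0" "nu1 \<ge> 0"
  shows "(c, b) \<in> set (TR a) \<Longrightarrow> c \<ge> 0"
  using assms by (induction a arbitrary: c b) auto

definition "J h a t = integral {0..t} (\<lambda>r. exp (- RR a * r) * (\<Sum>(c, b)\<leftarrow>TR a. c * h b (t - r)))"

lemma part_Suc: "asg_part s gm u nu0 nu1 (Suc n) f a t = J (asg_part s gm u nu0 nu1 n f) a t"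
  by (simp add: J_def)

definition "CC (h :: xi \<Rightarrow> real \<Rightarrow> real) \<longleftrightarrow> (\<forall>b T. continuous_on {0..T} (h b))"

lemma sl_cont: "CC h \<Longrightarrow> continuous_on {0..T} (\<lambda>\<tau>. \<Sum>(c, b)\<leftarrow>xs. c * h b \<tau>)"
  by (induction xs) (auto simp: CC_def intro!: continuous_intros)

lemma integrand_cont:
  assumes "CC h"
  shows "continuous_on {0..t} (\<lambda>r. exp (- RR a * r) * (\<Sum>(c, b)\<leftarrow>TR a. c * h b (t - r)))"
proof -
  have c1: "continuous_on {0..t} (\<lambda>r. h b (t - r))" for b
    by (rule continuous_on_compose2[of "{0..t}" "h b" "{0..t}" "\<lambda>r. t - r"])
       (use assms in \<open>auto simp: CC_def intro!: continuous_intros\<close>)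
  have "continuous_on {0..t} (\<lambda>r. (\<Sum>(c, b)\<leftarrow>xs. c * h b (t - r)))" for xs :: "(real \<times> xi) list"
    by (induction xs) (auto intro!: continuous_intros c1)
  then show ?thesis by (auto intro!: continuous_intros)
qed

lemma integrand_int: "CC h \<Longrightarrow> (\<lambda>r. exp (- RR a * r) * (\<Sum>(c, b)\<leftarrow>TR a. c * h b (t - r))) integrable_on {0..t}"
  by (rule integrable_continuous_interval, rule integrand_cont)

lemma sl_zero[simp]: "(\<Sum>(c, b)\<leftarrow>xs. (0::real)) = 0"
  by (induction xs) auto

lemma sl_diff: "(\<Sum>(c, b)\<leftarrow>xs. c * (f b - g b)) = (\<Sum>(c, b)\<leftarrow>xs. c * f b) - (\<Sum>(c, b)\<leftarrow>xs. c * (g b :: real))"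
  by (induction xs) (auto simp: algebra_simps)

lemma sl_add: "(\<Sum>(c, b)\<leftarrow>xs. c * (f b + g b)) = (\<Sum>(c, b)\<leftarrow>xs. c * f b) + (\<Sum>(c, b)\<leftarrow>xs. c * (g b :: real))"
  by (induction xs) (auto simp: algebra_simps)

lemma J_diff: assumes "CC h" "CC k" shows "J (\<lambda>b \<tau>. h b \<tau> - k b \<tau>) a t = J h a t - J k a t"
proof -
  have e: "\<And>r. (\<Sum>(c, b)\<leftarrow>TR a. c * (h b (t - r) - k b (t - r))) = (\<Sum>(c, b)\<leftarrow>TR a. c * h b (t - r)) - (\<Sum>(c, b)\<leftarrow>TR a. c * k b (t - r))"
    by (rule sl_diff)
  have "J (\<lambda>b \<tau>. h b \<tau> - k b \<tau>) a t = integral {0..t} (\<lambda>r. exp (- RR a * r) * (\<Sum>(c, b)\<leftarrow>TR a. c * h b (t - r)) - exp (- RR a * r) * (\<Sum>(c, b)\<leftarrow>TR a. c * k b (t - r)))"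
    unfolding J_def by (simp only: sl_diff right_diff_distrib[symmetric])
  also have "\<dots> = J h a t - J k a t" unfolding J_def
    by (rule integral_diff[OF integrand_int[OF assms(1)] integrand_int[OF assms(2)]])
  finally show ?thesis .
qed

lemma J_add: assumes "CC h" "CC k" shows "J (\<lambda>b \<tau>. h b \<tau> + k b \<tau>) a t = J h a t + J k a t"
proof -
  have e: "\<And>r. (\<Sum>(c, b)\<leftarrow>TR a. c * (h b (t - r) + k b (t - r))) = (\<Sum>(c, b)\<leftarrow>TR a. c * h b (t - r)) + (\<Sum>(c, b)\<leftarrow>TR a. c * k b (t - r))"
    by (rule sl_add)
  have "J (\<lambda>b \<tau>. h b \<tau> + k b \<tau>) a t = integral {0..t} (\<lambda>r. exp (- RR a * r) * (\<Sum>(c, b)\<leftarrow>TR a. c * h b (t - r)) + exp (- RR a * r) * (\<Sum>(c, b)\<leftarrow>TR a. c * k b (t - r)))"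
    unfolding J_def by (simp only: sl_add distrib_left[symmetric])
  also have "\<dots> = J h a t + J k a t" unfolding J_def
    by (rule integral_add[OF integrand_int[OF assms(1)] integrand_int[OF assms(2)]])
  finally show ?thesis .
qed

lemma CC_add: "CC h \<Longrightarrow> CC k \<Longrightarrow> CC (\<lambda>b \<tau>. h b \<tau> + k b \<tau>)"
  unfolding CC_def by (auto intro!: continuous_intros)

lemma CC_diff: "CC h \<Longrightarrow> CC k \<Longrightarrow> CC (\<lambda>b \<tau>. h b \<tau> - k b \<tau>)"
  unfolding CC_def by (auto intro!: continuous_intros)

lemma CC_sum: "(\<And>n. CC (h n)) \<Longrightarrow> CC (\<lambda>b \<tau>. \<Sum>n<(N::nat). h n b \<tau>)"
  unfolding CC_def by (auto intro!: continuous_intros)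

lemma J_sum: "(\<And>n. CC (h n)) \<Longrightarrow> J (\<lambda>b \<tau>. \<Sum>n<(N::nat). h n b \<tau>) a t = (\<Sum>n<N. J (h n) a t)"
proof (induction N)
  case 0 then show ?case by (simp add: J_def)
next
  case (Suc N)
  have "J (\<lambda>b \<tau>. \<Sum>n<Suc N. h n b \<tau>) a t = J (\<lambda>b \<tau>. (\<Sum>n<N. h n b \<tau>) + h N b \<tau>) a t" by simp
  also have "\<dots> = J (\<lambda>b \<tau>. \<Sum>n<N. h n b \<tau>) a t + J (h N) a t"
    using J_add[OF CC_sum[OF Suc.prems] Suc.prems] by simp
  finally show ?case using Suc by simp
qed

lemma reverse_integral:
  fixes \<phi> :: "real \<Rightarrow> real"
  assumes "continuous_on {0..t} \<phi>" "0 \<le> t"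
  shows "integral {0..t} (\<lambda>r. \<phi> (t - r)) = integral {0..t} \<phi>"
proof -
  define F where "F x = integral {0..x} \<phi>" for x
  have Fd: "(F has_real_derivative \<phi> x) (at x)" if "0 < x" "x < t" for x
  proof -
    have "(F has_real_derivative \<phi> x) (at x within {0..t})"
      unfolding F_def by (rule integral_has_real_derivative) (use assms that in auto)
    moreover have "at x within {0..t} = at x"
      by (rule at_within_interior) (use that in auto)
    ultimately show ?thesis by simp
  qed
  have Fc: "continuous_on {0..t} F"
    unfolding F_def by (rule indefinite_integral_continuous_1, rule integrable_continuous_interval, fact)
  have "((\<lambda>r. \<phi> (t - r)) has_integral ((\<lambda>r. - F (t - r)) t - (\<lambda>r. - F (t - r)) 0)) {0..t}"
  proof (rule fundamental_theorem_of_calculus_interior)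
    show "continuous_on {0..t} (\<lambda>r. - F (t - r))"
      by (intro continuous_intros continuous_on_compose2[OF Fc]) auto
    fix x assume x: "x \<in> {0<..<t}"
    have "((\<lambda>r. - F (t - r)) has_real_derivative (- (\<phi> (t - x) * (-1)))) (at x)"
      by (rule DERIV_chain2[where g="\<lambda>r. t - r" and f=F, THEN DERIV_minus]) (use x Fd in \<open>auto intro!: derivative_eq_intros\<close>)
    then show "((\<lambda>r. - F (t - r)) has_vector_derivative \<phi> (t - x)) (at x)"
      by (simp add: has_real_derivative_iff_has_vector_derivative)
  qed (use assms in auto)
  then show ?thesis by (simp add: F_def integral_unique)
qed

lemma J_conv:
  assumes "CC h" "0 \<le> t"
  shows "J h a t = exp (- RR a * t) * integral {0..t} (\<lambda>\<tau>. exp (RR a * \<tau>) * (\<Sum>(c, b)\<leftarrow>TR a. c * h b \<tau>))"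
proof -
  let ?m = "\<lambda>\<tau>. (\<Sum>(c, b)\<leftarrow>TR a. c * h b \<tau>)"
  have mc: "continuous_on {0..t} ?m"
    using assms(1) by (rule sl_cont)
  have "J h a t = integral {0..t} (\<lambda>r. exp (- RR a * t) * (exp (RR a * (t - r)) * ?m (t - r)))"
    unfolding J_def by (rule arg_cong[where f="integral _"]) (auto simp: exp_add[symmetric] algebra_simps)
  also have "\<dots> = exp (- RR a * t) * integral {0..t} (\<lambda>r. exp (RR a * (t - r)) * ?m (t - r))"
    by simp
  also have "\<dots> = exp (- RR a * t) * integral {0..t} (\<lambda>\<tau>. exp (RR a * \<tau>) * ?m \<tau>)"
    using reverse_integral[of t "\<lambda>\<tau>. exp (RR a * \<tau>) * ?m \<tau>"] mc assms(2)
    by (simp add: continuous_intros)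
  finally show ?thesis .
qed


lemma CC_J: assumes "CC h" shows "CC (J h)"
  unfolding CC_def
proof (intro allI)
  fix a T
  let ?\<phi> = "\<lambda>\<tau>. exp (RR a * \<tau>) * (\<Sum>(c, b)\<leftarrow>TR a. c * h b \<tau>)"
  have pc: "continuous_on {0..T} ?\<phi>"
    by (intro continuous_intros sl_cont assms)
  have "continuous_on {0..T} (\<lambda>t. exp (- RR a * t) * integral {0..t} ?\<phi>)"
    by (intro continuous_intros indefinite_integral_continuous_1 integrable_continuous_interval pc)
  then show "continuous_on {0..T} (J h a)"
    by (rule continuous_on_eq) (use J_conv[OF assms] in auto)
qed

lemma CC_const: "CC (\<lambda>b \<tau>. k b)"
  by (simp add: CC_def)

lemma CC_part0: "CC (\<lambda>b \<tau>. exp (- RR b * \<tau>) * f b)"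
  by (auto simp: CC_def intro!: continuous_intros)

lemma sl_abs: "(\<And>c b. (c, b) \<in> set xs \<Longrightarrow> 0 \<le> c) \<Longrightarrow> (\<And>b. \<bar>f b\<bar> \<le> g b) \<Longrightarrow>
   \<bar>\<Sum>(c, b)\<leftarrow>xs. c * f b\<bar> \<le> (\<Sum>(c, b)\<leftarrow>xs. c * (g b :: real))"
proof (induction xs)
  case (Cons x xs)
  obtain c b where x: "x = (c, b)" by force
  have c: "0 \<le> c" using Cons.prems(1) x by auto
  have "\<bar>c * f b\<bar> \<le> c * g b" using c Cons.prems(2)[of b] by (simp add: abs_mult mult_left_mono)
  moreover have "\<bar>\<Sum>(c, b)\<leftarrow>xs. c * f b\<bar> \<le> (\<Sum>(c, b)\<leftarrow>xs. c * g b)"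
    using Cons by auto
  ultimately show ?case using x by (simp add: abs_triangle_ineq order_trans[OF abs_triangle_ineq])
qed simp

context
  assumes nn: "s \<ge> 0" "gm \<ge> 0" "u \<ge> 0" "nu0 \<ge> 0" "nu1 \<ge> 0"
begin

lemma J_abs:
  assumes "CC h" "CC k" "\<And>b \<tau>. 0 \<le> \<tau> \<Longrightarrow> \<bar>h b \<tau>\<bar> \<le> k b \<tau>"
  shows "\<bar>J h a t\<bar> \<le> J k a t"
  unfolding J_def real_norm_def[symmetric]
proof (rule integral_norm_bound_integral[OF integrand_int[OF assms(1)] integrand_int[OF assms(2)]])
  fix r assume r: "r \<in> {0..t}"
  have "\<bar>\<Sum>(c, b)\<leftarrow>TR a. c * h b (t - r)\<bar> \<le> (\<Sum>(c, b)\<leftarrow>TR a. c * k b (t - r))"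
    by (rule sl_abs) (use trans_nonneg[OF nn] assms(3) r in auto)
  then show "norm (exp (- RR a * r) * (\<Sum>(c, b)\<leftarrow>TR a. c * h b (t - r)))
    \<le> exp (- RR a * r) * (\<Sum>(c, b)\<leftarrow>TR a. c * k b (t - r))"
    by (simp add: abs_mult mult_left_mono)
qed

lemma J_nonneg:
  assumes "CC k" "\<And>b \<tau>. 0 \<le> \<tau> \<Longrightarrow> 0 \<le> k b \<tau>"
  shows "0 \<le> J k a t"
  using J_abs[OF CC_const[of "\<lambda>b. 0"] assms(1), of a t] assms(2) by simp

lemma phi_alg:
  fixes lam cc K n E1 E2 :: real
  assumes "cc \<noteq> 0" "lam = K * n"
  shows "lam / cc * (- lam * E1 - ((- lam) * E1 * E2 + E1 * (E2 * (- cc))))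
     = E1 * (lam + K / cc * (E2 - 1) * (n * (lam + cc)))"
  using assms by (simp add: field_simps)

lemma J_Phi:
  assumes "s > 0" "0 \<le> t"
  defines "K \<equiv> s + gm + u * nu1 + u * nu0" and "cc \<equiv> s + 2 * gm"
  shows "J (\<lambda>b \<tau>. 1 + K / cc * nl b * (exp (cc * \<tau>) - 1)) a t = K / cc * nl a * (exp (cc * t) - 1)"
proof -
  have cpos: "cc > 0" using assms nn by (simp add: cc_def)
  define lam where "lam = K * nl a"
  have R: "RR a = lam" by (simp add: RR_nl lam_def K_def)
  have sum: "(\<Sum>(c, b)\<leftarrow>TR a. c * (1 + K / cc * nl b * (exp (cc * (t - r)) - 1)))
     = lam + (K / cc * (exp (cc * (t - r)) - 1)) * (nl a * (lam + cc))" for r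
  proof -
    have "(\<Sum>(c, b)\<leftarrow>TR a. c * (1 + K / cc * nl b * (exp (cc * (t - r)) - 1)))
      = 1 * (\<Sum>(c, b)\<leftarrow>TR a. c) + (K / cc * (exp (cc * (t - r)) - 1)) * (\<Sum>(c, b)\<leftarrow>TR a. c * nl b)"
      by (rule sl_affine) (simp add: mult_ac)
    also have "\<dots> = lam + (K / cc * (exp (cc * (t - r)) - 1)) * (nl a * (lam + cc))"
      unfolding SS_nl asg_rate_def[symmetric] R unfolding lam_def K_def cc_def by simp
    finally show ?thesis .
  qed
  define G where "G r = lam / cc * (exp (- lam * r) - exp (- lam * r) * exp (cc * (t - r)))" for r
  have "((\<lambda>r. exp (- RR a * r) * (\<Sum>(c, b)\<leftarrow>TR a. c * (1 + K / cc * nl b * (exp (cc * (t - r)) - 1))))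
        has_integral (G t - G 0)) {0..t}"
  proof (rule fundamental_theorem_of_calculus[OF assms(2)])
    fix r assume "r \<in> {0..t}"
    have "(G has_real_derivative lam / cc * (- lam * exp (- lam * r) - ((- lam) * exp (- lam * r) * exp (cc * (t - r))
        + exp (- lam * r) * (exp (cc * (t - r)) * (- cc))))) (at r)"
      unfolding G_def using cpos by (auto intro!: derivative_eq_intros)
    moreover have "lam / cc * (- lam * exp (- lam * r) - ((- lam) * exp (- lam * r) * exp (cc * (t - r))
        + exp (- lam * r) * (exp (cc * (t - r)) * (- cc))))
      = exp (- RR a * r) * (\<Sum>(c, b)\<leftarrow>TR a. c * (1 + K / cc * nl b * (exp (cc * (t - r)) - 1)))"
      unfolding sum R by (rule phi_alg) (use cpos in \<open>auto simp: lam_def\<close>)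
    ultimately show "(G has_vector_derivative exp (- RR a * r) * (\<Sum>(c, b)\<leftarrow>TR a. c * (1 + K / cc * nl b * (exp (cc * (t - r)) - 1)))) (at r within {0..t})"
      by (simp add: has_real_derivative_iff_has_vector_derivative[symmetric] has_field_derivative_at_within)
  qed
  moreover have "G t - G 0 = K / cc * nl a * (exp (cc * t) - 1)"
    unfolding G_def lam_def using cpos by (simp add: field_simps)
  ultimately show ?thesis unfolding J_def by (simp add: integral_unique)
qed

end

lemma w_eq:
  fixes y :: "real \<Rightarrow> real"
  assumes yc: "\<And>T. continuous_on {0..T} y"
    and yd: "\<And>\<tau>. 0 < \<tau> \<Longrightarrow> (y has_real_derivative FF (y \<tau>)) (at \<tau>)"
    and t: "0 \<le> t"
  shows "H a (y t) = exp (- RR a * t) * H a (y 0) + J (\<lambda>b \<tau>. H b (y \<tau>)) a t"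
proof -
  define \<psi> where "\<psi> r = exp (- RR a * r) * H a (y (t - r))" for r
  have "((\<lambda>r. - (exp (- RR a * r) * SS a (y (t - r)))) has_integral (\<psi> t - \<psi> 0)) {0..t}"
  proof (rule fundamental_theorem_of_calculus_interior[OF t])
    have c1: "continuous_on {0..t} (\<lambda>r. y (t - r))"
      by (rule continuous_on_compose2[OF yc[of t]]) (auto intro!: continuous_intros)
    have c2: "continuous_on {0..t} (\<lambda>r. H a (y (t - r)))"
      by (rule continuous_on_compose2[OF H_cont[of UNIV] c1]) auto
    show "continuous_on {0..t} \<psi>" unfolding \<psi>_def
      by (intro continuous_intros c2)
    fix r assume r: "r \<in> {0<..<t}"
    have dy: "((\<lambda>r. y (t - r)) has_real_derivative FF (y (t - r)) * (-1)) (at r)"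
      by (rule DERIV_chain2[where f=y and g="\<lambda>r. t - r"]) (use r yd in \<open>auto intro!: derivative_eq_intros\<close>)
    have dH': "((\<lambda>r. H a (y (t - r))) has_real_derivative dH a (y (t - r)) * (FF (y (t - r)) * (-1))) (at r)"
      by (rule DERIV_chain2[OF H_deriv dy])
    have dexp: "((\<lambda>r. exp (- RR a * r)) has_real_derivative (exp (- RR a * r) * (- RR a))) (at r)"
      by (auto intro!: derivative_eq_intros)
    have "(\<psi> has_real_derivative (exp (- RR a * r) * (- RR a)) * H a (y (t - r)) + (dH a (y (t - r)) * (FF (y (t - r)) * (-1))) * exp (- RR a * r)) (at r)"
      unfolding \<psi>_def by (rule DERIV_mult[OF dexp dH'])
    moreover have "(exp (- RR a * r) * (- RR a)) * H a (y (t - r)) + (dH a (y (t - r)) * (FF (y (t - r)) * (-1))) * exp (- RR a * r)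
       = - (exp (- RR a * r) * SS a (y (t - r)))"
    proof -
      have gz: "SS a (y (t - r)) = dH a (y (t - r)) * FF (y (t - r)) + RR a * H a (y (t - r))"
        using generator[of a "y (t - r)"] by linarith
      show ?thesis unfolding gz by (simp add: algebra_simps)
    qed
    ultimately show "(\<psi> has_vector_derivative - (exp (- RR a * r) * SS a (y (t - r)))) (at r)"
      by (simp add: has_real_derivative_iff_has_vector_derivative[symmetric])
  qed
  then have "((\<lambda>r. exp (- RR a * r) * SS a (y (t - r))) has_integral - (\<psi> t - \<psi> 0)) {0..t}"
    by (rule has_integral_neg_iff[THEN iffD1])
  then have "J (\<lambda>b \<tau>. H b (y \<tau>)) a t = - (\<psi> t - \<psi> 0)"
    unfolding J_def SS_def by (simp add: integral_unique)
  then show ?thesis unfolding \<psi>_def by simp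
qed


context
  assumes nn2: "s \<ge> 0" "gm \<ge> 0" "u \<ge> 0" "nu0 \<ge> 0" "nu1 \<ge> 0" and spos: "s > 0"
begin

lemma main:
  fixes y :: "real \<Rightarrow> real"
  assumes yc: "\<And>T. continuous_on {0..T} y"
    and yd: "\<And>\<tau>. 0 < \<tau> \<Longrightarrow> (y has_real_derivative FF (y \<tau>)) (at \<tau>)"
    and yr: "\<And>\<tau>. 0 \<le> \<tau> \<Longrightarrow> 0 \<le> y \<tau> \<and> y \<tau> \<le> 1"
    and t: "0 \<le> t"
  shows "H a (y t) = asg_expect s gm u nu0 nu1 (\<lambda>b. H b (y 0)) a t"
proof -
  define f0 where "f0 = (\<lambda>b. H b (y 0))"
  define part where "part n = asg_part s gm u nu0 nu1 n f0" for n
  define w where "w = (\<lambda>b \<tau>. H b (y \<tau>))"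
  have part0: "part 0 = (\<lambda>b \<tau>. exp (- RR b * \<tau>) * f0 b)"
    by (intro ext) (simp add: part_def)
  have partS: "part (Suc n) = J (part n)" for n
    by (intro ext) (simp only: part_def part_Suc)
  have CCp: "CC (part n)" for n
  proof (induction n)
    case 0 show ?case unfolding part0 by (rule CC_part0)
  next
    case (Suc n) show ?case unfolding partS by (rule CC_J[OF Suc.IH])
  qed
  have CCw: "CC w"
    unfolding CC_def w_def by (auto intro!: continuous_on_compose2[OF H_cont[of UNIV] yc])
  define rem where "rem N b \<tau> = w b \<tau> - (\<Sum>n<N. part n b \<tau>)" for N b \<tau>
  have CCr: "CC (rem N)" for N
    unfolding rem_def by (intro CC_diff CC_sum CCw CCp)
  have remS: "rem (Suc N) b \<tau> = J (rem N) b \<tau>" if "0 \<le> \<tau>" for N b \<tau>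
  proof -
    have "rem (Suc N) b \<tau> = w b \<tau> - part 0 b \<tau> - (\<Sum>n<N. part (Suc n) b \<tau>)"
      unfolding rem_def sum.lessThan_Suc_shift by simp
    also have "\<dots> = J w b \<tau> - (\<Sum>n<N. J (part n) b \<tau>)"
      using w_eq[OF yc yd that, of b] by (simp add: w_def part0 partS f0_def)
    also have "\<dots> = J (rem N) b \<tau>"
      unfolding rem_def by (simp add: J_diff[OF CCw CC_sum[OF CCp]] J_sum[OF CCp])
    finally show ?thesis .
  qed
  define Tl where "Tl N = (J ^^ N) (\<lambda>b \<tau>. 1)" for N
  have TlS: "Tl (Suc N) = J (Tl N)" for N by (simp add: Tl_def)
  have CCT: "CC (Tl N)" for N
    by (induction N) (auto simp: TlS intro: CC_J, simp add: Tl_def CC_const)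
  have Tnn: "0 \<le> Tl N b \<tau>" if "0 \<le> \<tau>" for N b \<tau>
    using that
  proof (induction N arbitrary: b \<tau>)
    case 0 then show ?case by (simp add: Tl_def)
  next
    case (Suc N) then show ?case unfolding TlS by (intro J_nonneg[OF nn2 CCT]) auto
  qed
  have remT: "\<bar>rem N b \<tau>\<bar> \<le> Tl N b \<tau>" if "0 \<le> \<tau>" for N b \<tau>
    using that
  proof (induction N arbitrary: b \<tau>)
    case 0 then show ?case using H_range[of "y \<tau>" b] yr[of \<tau>] by (simp add: rem_def w_def Tl_def)
  next
    case (Suc N) then show ?case
      unfolding remS[OF Suc.prems] TlS by (intro J_abs[OF nn2 CCr CCT]) auto
  qed
  define K where "K = s + gm + u * nu1 + u * nu0"
  define cc where "cc = s + 2 * gm"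
  define Phi where "Phi b \<tau> = K / cc * nl b * (exp (cc * \<tau>) - 1)" for b \<tau>
  have ccpos: "cc > 0" using nn2 spos by (simp add: cc_def)
  have CCPhi: "CC (\<lambda>b \<tau>. 1 + Phi b \<tau>)"
    unfolding CC_def Phi_def using ccpos by (auto intro!: continuous_intros)
  have Kpos: "K \<ge> 0" using nn2 by (simp add: K_def)
  have Phinn: "0 \<le> Phi b \<tau>" if "0 \<le> \<tau>" for b \<tau>
    unfolding Phi_def using ccpos Kpos nl_pos[of b] that by (intro mult_nonneg_nonneg) auto
  have Sbound: "(\<Sum>n<N. Tl (Suc n) b \<tau>) \<le> Phi b \<tau>" if "0 \<le> \<tau>" for N b \<tau>
    using that
  proof (induction N arbitrary: b \<tau>)
    case 0 then show ?case using Phinn by simp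
  next
    case (Suc N)
    have CCs: "CC (\<lambda>b \<tau>. \<Sum>n<N. Tl (Suc n) b \<tau>)" by (intro CC_sum CCT)
    have "(\<Sum>n<Suc N. Tl (Suc n) b \<tau>) = J (Tl 0) b \<tau> + (\<Sum>n<N. J (Tl (Suc n)) b \<tau>)"
      unfolding sum.lessThan_Suc_shift by (simp only: TlS)
    also have "\<dots> = J (\<lambda>b \<tau>. 1) b \<tau> + J (\<lambda>b \<tau>. \<Sum>n<N. Tl (Suc n) b \<tau>) b \<tau>"
    proof -
      have js: "J (\<lambda>b \<tau>. \<Sum>n<N. Tl (Suc n) b \<tau>) b \<tau> = (\<Sum>n<N. J (Tl (Suc n)) b \<tau>)"
        by (rule J_sum[where h="\<lambda>n. Tl (Suc n)"]) (rule CCT)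
      have t0: "Tl 0 = (\<lambda>b \<tau>. 1)" by (simp add: Tl_def)
      show ?thesis by (simp only: js t0)
    qed
    also have "\<dots> = J (\<lambda>b \<tau>. 1 + (\<Sum>n<N. Tl (Suc n) b \<tau>)) b \<tau>"
      by (rule J_add[OF CC_const CCs, symmetric])
    also have "\<dots> \<le> \<bar>\<dots>\<bar>" by simp
    also have "\<dots> \<le> J (\<lambda>b \<tau>. 1 + Phi b \<tau>) b \<tau>"
    proof (rule J_abs[OF nn2 CC_add[OF CC_const CCs] CCPhi])
      fix b' :: xi and \<tau>' :: real assume "0 \<le> \<tau>'"
      then show "\<bar>1 + (\<Sum>n<N. Tl (Suc n) b' \<tau>')\<bar> \<le> 1 + Phi b' \<tau>'"
        using Suc.IH[of \<tau>' b'] Tnn by (simp add: sum_nonneg)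
    qed
    also have "\<dots> = Phi b \<tau>"
      unfolding Phi_def K_def cc_def by (rule J_Phi[OF nn2 spos Suc.prems])
    finally show ?case .
  qed
  have summ: "summable (\<lambda>n. Tl (Suc n) a t)"
    by (rule summableI_nonneg_bounded[where x="Phi a t"]) (use Tnn t Sbound in auto)
  have T0: "(\<lambda>n. Tl n a t) \<longlonglongrightarrow> 0"
    by (rule LIMSEQ_imp_Suc[OF summable_LIMSEQ_zero[OF summ]])
  have R0: "(\<lambda>n. rem n a t) \<longlonglongrightarrow> 0"
    by (rule Lim_null_comparison[OF _ T0]) (use remT t in auto)
  have "(\<lambda>n. part n a t) sums w a t"
  proof -
    have "(\<lambda>N. w a t - rem N a t) \<longlonglongrightarrow> w a t - 0"
      by (intro tendsto_intros R0)
    then show ?thesis unfolding sums_def rem_def by simp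
  qed
  then have "w a t = (\<Sum>n. part n a t)" by (rule sums_unique)
  then show ?thesis
    unfolding asg_expect_def part_def f0_def w_def by simp
qed

end
end

theorem theorem2p11:
  fixes s g u nu0 nu1 y0 :: real and y :: "real \<Rightarrow> real"
  assumes "s > 0" and "g \<ge> 0" and "u > 0" and "nu0 \<ge> 0" and "nu1 \<ge> 0"
    and "nu0 + nu1 = 1"
    and "0 \<le> y0" and "y0 \<le> 1"
    and "y 0 = y0"
    and "\<And>t. t \<ge> 0 \<Longrightarrow> (y has_real_derivative
           (- y t * (1 - y t) * (s + g * (1 - y t)) + u * nu1 * (1 - y t) - u * nu0 * y t))
           (at t within {0..})"
  shows "(\<forall>a t. t \<ge> 0 \<longrightarrow> H a (y t) = asg_expect s g u nu0 nu1 (\<lambda>b. H b y0) a t)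
       \<and> (\<forall>t. t \<ge> 0 \<longrightarrow> y t = asg_expect s g u nu0 nu1 (\<lambda>b. H b y0) Leaf t)"
proof -
  let ?F = "FF s g u nu0 nu1"
  have dw: "(y has_real_derivative ?F (y t)) (at t within {0..})" if "0 \<le> t" for t
    using assms(10)[OF that] by (simp add: FF_def)
  have ycont: "continuous_on {0..} y"
    unfolding continuous_on_eq_continuous_within using dw DERIV_continuous by blast
  have yc: "continuous_on {0..T} y" for T
    by (rule continuous_on_subset[OF ycont]) auto
  have yd: "(y has_real_derivative ?F (y \<tau>)) (at \<tau>)" if "0 < \<tau>" for \<tau>
  proof -
    have "at \<tau> within {0..} = at \<tau>" by (rule at_within_interior) (use that in auto)
    then show ?thesis using dw[of \<tau>] that by simp
  qed
  have ylow: "0 \<le> y \<tau>" if \<tau>: "0 \<le> \<tau>" for \<tau>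
  proof -
    have "(\<lambda>x. - y x) \<tau> \<le> 0"
    proof (rule stay_nonpos[where z="\<lambda>x. - y x" and T=\<tau> and z'="\<lambda>x. - ?F (y x)" and M=0])
      show "continuous_on {0..\<tau>} (\<lambda>x. - y x)" using yc by (intro continuous_intros)
      show "- y 0 \<le> 0" using assms by simp
      show "0 \<le> \<tau>" by fact
      show "((\<lambda>x. - y x) has_real_derivative - ?F (y x)) (at x)" if "0 < x" "x < \<tau>" for x
        using yd[of x] that by (auto intro: DERIV_minus)
      fix x assume x: "0 < x" "x < \<tau>" "0 < - y x"
      have e: "?F (y x) = (- y x) * (1 - y x) * (s + g * (1 - y x)) + u * nu1 * (1 - y x) + u * nu0 * (- y x)"
        by (simp add: FF_def algebra_simps)
      have "0 \<le> (- y x) * (1 - y x) * (s + g * (1 - y x))"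
        using x assms by (intro mult_nonneg_nonneg) auto
      moreover have "0 \<le> u * nu1 * (1 - y x)" using x assms by (intro mult_nonneg_nonneg) auto
      moreover have "0 \<le> u * nu0 * (- y x)" using x assms by (intro mult_nonneg_nonneg) auto
      ultimately show "- ?F (y x) \<le> 0 * - y x" unfolding e by linarith
    qed
    then show ?thesis by simp
  qed
  have yup: "y \<tau> \<le> 1" if \<tau>: "0 \<le> \<tau>" for \<tau>
  proof -
    have "compact (y ` {0..\<tau>})" by (rule compact_continuous_image[OF yc compact_Icc])
    then obtain B where B: "\<And>x. x \<in> {0..\<tau>} \<Longrightarrow> \<bar>y x\<bar> \<le> B"
      using compact_imp_bounded bounded_iff by (metis image_eqI real_norm_def)
    have "(\<lambda>x. y x - 1) \<tau> \<le> 0"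
    proof (rule stay_nonpos[where z="\<lambda>x. y x - 1" and T=\<tau> and z'="\<lambda>x. ?F (y x)" and M="B * s"])
      show "continuous_on {0..\<tau>} (\<lambda>x. y x - 1)" using yc by (intro continuous_intros)
      show "y 0 - 1 \<le> 0" using assms by simp
      show "0 \<le> \<tau>" by fact
      show "((\<lambda>x. y x - 1) has_real_derivative ?F (y x)) (at x)" if "0 < x" "x < \<tau>" for x
        using yd[of x] that by (auto intro!: derivative_eq_intros)
      fix x assume x: "0 < x" "x < \<tau>" "0 < y x - 1"
      define d where "d = y x - 1"
      have dpos: "0 < d" using x by (simp add: d_def)
      have e: "?F (y x) = d * y x * s - g * d * d * y x - d * u * nu1 - d * u * nu0 - u * nu0"
        by (simp add: FF_def d_def algebra_simps)
      have yB: "y x \<le> B" using B[of x] x by auto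
      have "0 \<le> g * d * d * y x" using dpos x assms by (intro mult_nonneg_nonneg) auto
      moreover have "0 \<le> d * u * nu1" using dpos assms by (intro mult_nonneg_nonneg) auto
      moreover have "0 \<le> d * u * nu0" using dpos assms by (intro mult_nonneg_nonneg) auto
      moreover have "0 \<le> u * nu0" using assms by (intro mult_nonneg_nonneg) auto
      moreover have "d * y x * s \<le> d * B * s"
        using yB dpos assms by (intro mult_right_mono mult_left_mono) auto
      ultimately have "?F (y x) \<le> d * B * s" unfolding e by linarith
      then show "?F (y x) \<le> B * s * (y x - 1)" by (simp add: d_def algebra_simps)
    qed
    then show ?thesis by simp
  qed
  have main': "H a (y t) = asg_expect s g u nu0 nu1 (\<lambda>b. H b y0) a t" if "0 \<le> t" for a t
    using main[of s g u nu0 nu1 y t a] yc yd ylow yup that assms by auto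
  show ?thesis
  proof (intro conjI allI impI)
    fix a t :: real
    show "0 \<le> t \<Longrightarrow> H a (y t) = asg_expect s g u nu0 nu1 (\<lambda>b. H b y0) a t" for a :: xi
      by (rule main')
  next
    fix t :: real assume "0 \<le> t"
    then show "y t = asg_expect s g u nu0 nu1 (\<lambda>b. H b y0) Leaf t"
      using main'[of t Leaf] by simp
  qed
qed

end
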